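(* Let $A,B$ be set-germs at $0\in\mathbb{R}^n$ with $0\in\overline{A}\cap\overline{B}$ and $D(A)\subseteq D(B)$. If $A$ satisfies condition (WSSP)-relative to $B$, then $A$ satisfies condition (SSP)-relative to $B$. Hence the relative conditions (SSP) and (WSSP) are equivalent.
   Context: For a set-germ $A\subset\mathbb{R}^n$ at $0$ with $0\in\overline A$, $D(A)=\{a\in S^{n-1}:\exists\, x_i\in A\setminus\{0\},\ x_i\to0,\ x_i/\|x_i\|\to a\}$. For sequences, $\|u_m\|\ll\|v_m\|,\|w_m\|$ means $\|u_m\|/\|v_m\|\to0$ and $\|u_m\|/\|w_m\|\to0$. $A$ satisfies condition (SSP)-relative to $B$ if for every sequence $a_m\in B$ tending to $0$ with $\lim a_m/\|a_m\|\in D(A)$ there is a sequence $b_m\in A$ with $\|a_m-b_m\|\ll\|a_m\|,\|b_m\|$. $A$ satisfies condition (WSSP)-relative to $B$ if for every sequence $a_m\in B$ tending to $0$ with $\lim a_m/\|a_m\|\in D(A)$ there is a subsequence $(m_j)$ and points $b_{m_j}\in A$ with $\|a_{m_j}-b_{m_j}\|\ll\|a_{m_j}\|,\|b_{m_j}\|$ as $j\to\infty$. *)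

theory Defs
  imports "HOL-Analysis.Analysis"
begin

text \<open>Set-germs at 0 are represented by sets; all conditions below only
depend on the behaviour near 0.\<close>

definition tangent_dirs :: "'a::euclidean_space set \<Rightarrow> 'a set" ("D") where
  "D A = {v. norm v = 1 \<and> (\<exists>x::nat \<Rightarrow> 'a. (\<forall>i. x i \<in> A - {0}) \<and> x \<longlonglongrightarrow> 0
            \<and> (\<lambda>i. x i /\<^sub>R norm (x i)) \<longlonglongrightarrow> v)}"

definition SSP_rel :: "'a::euclidean_space set \<Rightarrow> 'a set \<Rightarrow> bool" where
  "SSP_rel A B \<longleftrightarrow> (\<forall>a::nat \<Rightarrow> 'a. \<forall>v.
      (\<forall>m. a m \<in> B - {0}) \<and> a \<longlonglongrightarrow> 0 \<and> (\<lambda>m. a m /\<^sub>R norm (a m)) \<longlonglongrightarrow> v \<and> v \<in> D A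
      \<longrightarrow> (\<exists>b::nat \<Rightarrow> 'a. (\<forall>m. b m \<in> A)
             \<and> (\<lambda>m. norm (a m - b m) / norm (a m)) \<longlonglongrightarrow> 0
             \<and> (\<lambda>m. norm (a m - b m) / norm (b m)) \<longlonglongrightarrow> 0))"

definition WSSP_rel :: "'a::euclidean_space set \<Rightarrow> 'a set \<Rightarrow> bool" where
  "WSSP_rel A B \<longleftrightarrow> (\<forall>a::nat \<Rightarrow> 'a. \<forall>v.
      (\<forall>m. a m \<in> B - {0}) \<and> a \<longlonglongrightarrow> 0 \<and> (\<lambda>m. a m /\<^sub>R norm (a m)) \<longlonglongrightarrow> v \<and> v \<in> D A
      \<longrightarrow> (\<exists>r::nat \<Rightarrow> nat. \<exists>b::nat \<Rightarrow> 'a. strict_mono r \<and> (\<forall>j. b j \<in> A)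
             \<and> (\<lambda>j. norm (a (r j) - b j) / norm (a (r j))) \<longlonglongrightarrow> 0
             \<and> (\<lambda>j. norm (a (r j) - b j) / norm (b j)) \<longlonglongrightarrow> 0))"

end

theory Submission
  imports Defs
begin

lemma not_ev_subseq:
  assumes "\<not> eventually P sequentially"
  shows "\<exists>s::nat\<Rightarrow>nat. strict_mono s \<and> (\<forall>k. \<not> P (s k))"
proof -
  have "infinite {m. \<not> P m}"
  proof
    assume "finite {m. \<not> P m}"
    then obtain N where "\<forall>m\<in>{m. \<not> P m}. m < N"
      by (meson finite_nat_set_iff_bounded)
    then have "\<forall>m\<ge>N. P m" by force
    then show False using assms by (auto simp: eventually_sequentially)
  qed
  from infinite_enumerate[OF this] show ?thesis by auto
qed

lemma wssp_imp_ssp: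
  fixes A B :: "'a::euclidean_space set"
  assumes A0: "0 \<in> closure A" and W: "WSSP_rel A B"
  shows "SSP_rel A B"
  unfolding SSP_rel_def
proof (intro allI impI)
  fix a :: "nat \<Rightarrow> 'a" and v
  assume H: "(\<forall>m. a m \<in> B - {0}) \<and> a \<longlonglongrightarrow> 0 \<and> (\<lambda>m. a m /\<^sub>R norm (a m)) \<longlonglongrightarrow> v \<and> v \<in> D A"
  define F where "F m b = max (norm (a m - b) / norm (a m)) (norm (a m - b) / norm b)" for m b
  have Fnn: "F m b \<ge> 0" for m b unfolding F_def by (simp add: le_max_iff_disj)
  have Ane: "A \<noteq> {}" using A0 by auto
  have ev: "eventually (\<lambda>m. \<exists>b\<in>A. F m b < e) sequentially" if e: "e > 0" for e
  proof (rule ccontr)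
    assume "\<not> ?thesis"
    from not_ev_subseq[OF this] obtain s :: "nat \<Rightarrow> nat" where s: "strict_mono s" "\<forall>k. \<not> (\<exists>b\<in>A. F (s k) b < e)"
      by blast
    have "(\<forall>m. (a \<circ> s) m \<in> B - {0}) \<and> (a \<circ> s) \<longlonglongrightarrow> 0 \<and> (\<lambda>m. (a \<circ> s) m /\<^sub>R norm ((a \<circ> s) m)) \<longlonglongrightarrow> v \<and> v \<in> D A"
    proof -
      have "((\<lambda>m. a m /\<^sub>R norm (a m)) \<circ> s) \<longlonglongrightarrow> v"
        using LIMSEQ_subseq_LIMSEQ H s(1) by blast
      then show ?thesis using H LIMSEQ_subseq_LIMSEQ[OF _ s(1), of a 0] by (auto simp: o_def)
    qed
    with W obtain r b where rb: "strict_mono r" "\<forall>j. b j \<in> A"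
      "(\<lambda>j. norm ((a \<circ> s) (r j) - b j) / norm ((a \<circ> s) (r j))) \<longlonglongrightarrow> 0"
      "(\<lambda>j. norm ((a \<circ> s) (r j) - b j) / norm (b j)) \<longlonglongrightarrow> 0"
      unfolding WSSP_rel_def by blast
    have e1: "eventually (\<lambda>j. norm ((a \<circ> s) (r j) - b j) / norm ((a \<circ> s) (r j)) < e) sequentially"
      using rb(3) e by (rule order_tendstoD)
    have e2: "eventually (\<lambda>j. norm ((a \<circ> s) (r j) - b j) / norm (b j) < e) sequentially"
      using rb(4) e by (rule order_tendstoD)
    from eventually_conj[OF e1 e2] obtain N where N:
      "\<forall>j\<ge>N. norm ((a \<circ> s) (r j) - b j) / norm ((a \<circ> s) (r j)) < e \<and>
         norm ((a \<circ> s) (r j) - b j) / norm (b j) < e"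
      unfolding eventually_sequentially by blast
    define j where "j = N"
    have "norm ((a \<circ> s) (r j) - b j) / norm ((a \<circ> s) (r j)) < e"
      "norm ((a \<circ> s) (r j) - b j) / norm (b j) < e" using N unfolding j_def by auto
    then have "F (s (r j)) (b j) < e" unfolding F_def by simp
    then show False using s(2) rb(2) by blast
  qed
  define g where "g m = Inf (F m ` A)" for m
  have bdd: "bdd_below (F m ` A)" for m by (rule bdd_belowI[of _ 0]) (use Fnn in auto)
  have gev: "eventually (\<lambda>m. g m < e) sequentially" if "e > 0" for e
    using ev[OF that]
  proof (rule eventually_mono)
    fix m assume "\<exists>b\<in>A. F m b < e"
    then obtain b where "b \<in> A" "F m b < e" by blast
    then show "g m < e" unfolding g_def using cInf_lower[OF _ bdd, of "F m b" m] by force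
  qed
  have "\<exists>b\<in>A. F m b < g m + 1 / (real m + 1)" for m
  proof -
    have "Inf (F m ` A) < g m + 1 / (real m + 1)" unfolding g_def by simp
    from cInf_lessD[OF _ this] Ane show ?thesis by auto
  qed
  then obtain b where b: "\<And>m. b m \<in> A" "\<And>m. F m (b m) < g m + 1 / (real m + 1)"
    by metis
  have Fb: "(\<lambda>m. F m (b m)) \<longlonglongrightarrow> 0"
  proof (rule order_tendstoI)
    fix e :: real assume "e < 0"
    show "eventually (\<lambda>m. e < F m (b m)) sequentially" using Fnn \<open>e < 0\<close> by (simp add: less_le_trans)
  next
    fix e :: real assume e: "0 < e"
    have "eventually (\<lambda>m. g m < e/2) sequentially" using gev[of "e/2"] e by linarith
    moreover have "eventually (\<lambda>m. 1 / (real m + 1) < e/2) sequentially"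
      using order_tendstoD(2)[OF LIMSEQ_inverse_real_of_nat, of "e/2"] e
      by (simp add: inverse_eq_divide add.commute)
    ultimately show "eventually (\<lambda>m. F m (b m) < e) sequentially"
    proof (rule eventually_elim2)
      fix m assume "g m < e/2" "1 / (real m + 1) < e/2"
      with b(2)[of m] show "F m (b m) < e" by linarith
    qed
  qed
  show "\<exists>b. (\<forall>m. b m \<in> A) \<and> (\<lambda>m. norm (a m - b m) / norm (a m)) \<longlonglongrightarrow> 0
             \<and> (\<lambda>m. norm (a m - b m) / norm (b m)) \<longlonglongrightarrow> 0"
  proof (intro exI conjI allI)
    show "b m \<in> A" for m by (rule b(1))
    show "(\<lambda>m. norm (a m - b m) / norm (a m)) \<longlonglongrightarrow> 0"
      by (rule tendsto_sandwich[OF _ _ tendsto_const Fb]) (auto simp: F_def)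
    show "(\<lambda>m. norm (a m - b m) / norm (b m)) \<longlonglongrightarrow> 0"
      by (rule tendsto_sandwich[OF _ _ tendsto_const Fb]) (auto simp: F_def)
  qed
qed

lemma ssp_imp_wssp:
  fixes A B :: "'a::euclidean_space set"
  assumes "SSP_rel A B" shows "WSSP_rel A B"
  unfolding WSSP_rel_def
proof (intro allI impI)
  fix a :: "nat \<Rightarrow> 'a" and v
  assume H: "(\<forall>m. a m \<in> B - {0}) \<and> a \<longlonglongrightarrow> 0 \<and> (\<lambda>m. a m /\<^sub>R norm (a m)) \<longlonglongrightarrow> v \<and> v \<in> D A"
  with assms obtain b where "\<forall>m. b m \<in> A" "(\<lambda>m. norm (a m - b m) / norm (a m)) \<longlonglongrightarrow> 0"
    "(\<lambda>m. norm (a m - b m) / norm (b m)) \<longlonglongrightarrow> 0" unfolding SSP_rel_def by blast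
  then show "\<exists>r b. strict_mono r \<and> (\<forall>j. b j \<in> A)
             \<and> (\<lambda>j. norm (a (r j) - b j) / norm (a (r j))) \<longlonglongrightarrow> 0
             \<and> (\<lambda>j. norm (a (r j) - b j) / norm (b j)) \<longlonglongrightarrow> 0"
    by (intro exI[of _ "\<lambda>j. j"] exI[of _ b]) (simp add: strict_mono_def)
qed

theorem proposition2p7:
  fixes A B :: "'a::euclidean_space set"
  assumes "0 \<in> closure A" and "0 \<in> closure B" and "D A \<subseteq> D B"
  shows "(WSSP_rel A B \<longrightarrow> SSP_rel A B) \<and> (SSP_rel A B \<longleftrightarrow> WSSP_rel A B)"
  using wssp_imp_ssp[OF assms(1)] ssp_imp_wssp by blast

end
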